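(* Let $n\equiv 3\pmod 4$. Then $\{y_1,\ldots,y_n\}$ is a generating set of $\mathcal{AM}_n$ of minimum size. In particular, $\mathcal{AM}_n$ has rank $n$.
   Context: Let $\Omega_n=\{1<2<\cdots<n\}$ and $\mathcal{I}_n$ the monoid of all partial injective maps of $\Omega_n$, written on the right and composed left to right. $\mathcal{AI}_n$ is the set of all $\alpha\in\mathcal{I}_n$ with $\alpha=\sigma|_{\mathrm{Dom}(\alpha)}$ for some even permutation $\sigma$; $\mathcal{PMI}_n$ is the set of monotone (order-preserving or order-reversing) elements and $\mathcal{AM}_n=\mathcal{AI}_n\cap\mathcal{PMI}_n$. The rank of a monoid is the minimum size of a generating set. Let $X_i=\Omega_n\setminus\{i\}$. For $1\leqslant i\leqslant n-1$, $y_i$ is the unique order-reversing partial permutation with domain $X_i$ and image $X_{i+1}$, and $y_n$ is the unique order-preserving partial permutation with domain $X_n$ and image $X_1$. *)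

theory Defs
  imports "HOL-Combinatorics.Permutations"
begin

definition PI :: "nat \<Rightarrow> (nat \<rightharpoonup> nat) set" where
  "PI n = {\<alpha>. dom \<alpha> \<subseteq> {1..n} \<and> ran \<alpha> \<subseteq> {1..n} \<and> inj_on \<alpha> (dom \<alpha>)}"

text \<open>Maps are written on the right and composed left to right: x (alpha beta) = (x alpha) beta.\<close>
definition pcomp :: "(nat \<rightharpoonup> nat) \<Rightarrow> (nat \<rightharpoonup> nat) \<Rightarrow> (nat \<rightharpoonup> nat)" where
  "pcomp \<alpha> \<beta> = \<beta> \<circ>\<^sub>m \<alpha>"

definition pid :: "nat \<Rightarrow> (nat \<rightharpoonup> nat)" where
  "pid n = (\<lambda>x. if x \<in> {1..n} then Some x else None)"

definition AI :: "nat \<Rightarrow> (nat \<rightharpoonup> nat) set" where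
  "AI n = {\<alpha> \<in> PI n. \<exists>\<sigma>. \<sigma> permutes {1..n} \<and> evenperm \<sigma> \<and>
                         (\<forall>x\<in>dom \<alpha>. \<alpha> x = Some (\<sigma> x))}"

definition order_preserving :: "(nat \<rightharpoonup> nat) \<Rightarrow> bool" where
  "order_preserving \<alpha> = (\<forall>x\<in>dom \<alpha>. \<forall>y\<in>dom \<alpha>. x < y \<longrightarrow> the (\<alpha> x) < the (\<alpha> y))"

definition order_reversing :: "(nat \<rightharpoonup> nat) \<Rightarrow> bool" where
  "order_reversing \<alpha> = (\<forall>x\<in>dom \<alpha>. \<forall>y\<in>dom \<alpha>. x < y \<longrightarrow> the (\<alpha> x) > the (\<alpha> y))"

definition PMI :: "nat \<Rightarrow> (nat \<rightharpoonup> nat) set" where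
  "PMI n = {\<alpha> \<in> PI n. order_preserving \<alpha> \<or> order_reversing \<alpha>}"

definition AM :: "nat \<Rightarrow> (nat \<rightharpoonup> nat) set" where
  "AM n = AI n \<inter> PMI n"

inductive_set gen :: "nat \<Rightarrow> (nat \<rightharpoonup> nat) set \<Rightarrow> (nat \<rightharpoonup> nat) set"
  for n :: nat and A :: "(nat \<rightharpoonup> nat) set" where
  gen_id: "pid n \<in> gen n A"
| gen_gen: "a \<in> A \<Longrightarrow> a \<in> gen n A"
| gen_mult: "a \<in> gen n A \<Longrightarrow> b \<in> gen n A \<Longrightarrow> pcomp a b \<in> gen n A"

definition generates :: "nat \<Rightarrow> (nat \<rightharpoonup> nat) set \<Rightarrow> (nat \<rightharpoonup> nat) set \<Rightarrow> bool" where
  "generates n A M = (A \<subseteq> M \<and> gen n A = M)"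

definition rank :: "nat \<Rightarrow> (nat \<rightharpoonup> nat) set \<Rightarrow> nat" where
  "rank n M = (LEAST k. \<exists>A. finite A \<and> card A = k \<and> generates n A M)"

definition Xs :: "nat \<Rightarrow> nat \<Rightarrow> nat set" where
  "Xs n i = {1..n} - {i}"

definition y :: "nat \<Rightarrow> nat \<Rightarrow> (nat \<rightharpoonup> nat)" where
  "y n i = (if i < n then
      (THE \<alpha>. \<alpha> \<in> PI n \<and> order_reversing \<alpha> \<and> dom \<alpha> = Xs n i \<and> ran \<alpha> = Xs n (i+1))
    else
      (THE \<alpha>. \<alpha> \<in> PI n \<and> order_preserving \<alpha> \<and> dom \<alpha> = Xs n n \<and> ran \<alpha> = Xs n 1))"

end

theory Submission
  imports Defs
begin

definition cyc :: "nat \<Rightarrow> nat \<Rightarrow> nat \<Rightarrow> nat" where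
  "cyc a b x = (if x = a then b else if a < b \<and> a < x \<and> x \<le> b then x - 1
      else if b < a \<and> b \<le> x \<and> x < a then x + 1 else x)"

lemma cyc_same: "cyc a a = id"
  by (auto simp: cyc_def fun_eq_iff)

lemma cyc_up: "a \<le> b \<Longrightarrow> cyc a (Suc b) = Transposition.transpose b (Suc b) \<circ> cyc a b"
  by (auto simp: cyc_def fun_eq_iff transpose_def)

lemma cyc_down: "b \<le> a \<Longrightarrow> cyc (Suc a) b = cyc a b \<circ> Transposition.transpose a (Suc a)"
  by (auto simp: cyc_def fun_eq_iff transpose_def)

lemma cyc_up_perm0: assumes "a \<le> b" shows "1 \<le> a \<Longrightarrow> b \<le> n \<Longrightarrow>
   cyc a b permutes {1..n} \<and> (evenperm (cyc a b) \<longleftrightarrow> even (a + b))"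
using assms proof (induction b rule: dec_induct)
  case base
  then show ?case using permutes_id[of "{1..n}", unfolded id_def] by (simp add: cyc_same id_def)
next
  case (step m)
  have p: "cyc a m permutes {1..n}" and e: "evenperm (cyc a m) \<longleftrightarrow> even (a + m)" using step by auto
  have t: "Transposition.transpose m (Suc m) permutes {1..n}"
    using step by (intro permutes_swap_id) auto
  have "evenperm (Transposition.transpose m (Suc m) \<circ> cyc a m) \<longleftrightarrow> (False = evenperm (cyc a m))"
    by (subst evenperm_comp) (auto simp: evenperm_swap permutation_swap_id
          intro: permutes_imp_permutation[OF _ p])
  moreover have "cyc a (Suc m) = Transposition.transpose m (Suc m) \<circ> cyc a m" using cyc_up step.hyps by auto
  ultimately have "cyc a (Suc m) permutes {1..n}" "evenperm (cyc a (Suc m)) \<longleftrightarrow> \<not> evenperm (cyc a m)"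
    using permutes_compose[OF p t] by metis+
  then show ?case using e by simp
qed

lemma cyc_down_perm0: assumes "b \<le> a" shows "1 \<le> b \<Longrightarrow> a \<le> n \<Longrightarrow>
   cyc a b permutes {1..n} \<and> (evenperm (cyc a b) \<longleftrightarrow> even (a + b))"
using assms proof (induction a rule: dec_induct)
  case base
  then show ?case using permutes_id[of "{1..n}", unfolded id_def] by (simp add: cyc_same id_def)
next
  case (step m)
  have p: "cyc m b permutes {1..n}" and e: "evenperm (cyc m b) \<longleftrightarrow> even (m + b)" using step by auto
  have t: "Transposition.transpose m (Suc m) permutes {1..n}"
    using step by (intro permutes_swap_id) auto
  have "evenperm (cyc m b \<circ> Transposition.transpose m (Suc m)) \<longleftrightarrow> (evenperm (cyc m b) = False)"
    by (subst evenperm_comp) (auto simp: evenperm_swap permutation_swap_id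
          intro: permutes_imp_permutation[OF _ p])
  moreover have "cyc (Suc m) b = cyc m b \<circ> Transposition.transpose m (Suc m)" using cyc_down step.hyps by auto
  ultimately have "cyc (Suc m) b permutes {1..n}" "evenperm (cyc (Suc m) b) \<longleftrightarrow> \<not> evenperm (cyc m b)"
    using permutes_compose[OF t p] by metis+
  then show ?case using e by simp
qed

lemma cyc_up_perm: "1 \<le> a \<Longrightarrow> a \<le> b \<Longrightarrow> b \<le> n \<Longrightarrow>
   cyc a b permutes {1..n} \<and> (evenperm (cyc a b) \<longleftrightarrow> even (a + b))"
  using cyc_up_perm0 by blast
lemma cyc_down_perm: "1 \<le> b \<Longrightarrow> b \<le> a \<Longrightarrow> a \<le> n \<Longrightarrow>
   cyc a b permutes {1..n} \<and> (evenperm (cyc a b) \<longleftrightarrow> even (a + b))"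
  using cyc_down_perm0 by blast

lemma cyc_perm: "a \<in> {1..n} \<Longrightarrow> b \<in> {1..n} \<Longrightarrow>
   cyc a b permutes {1..n} \<and> (evenperm (cyc a b) \<longleftrightarrow> even (a + b))"
  using cyc_up_perm[of a b n] cyc_down_perm[of b a n] by (cases "a \<le> b") auto

definition revp :: "nat \<Rightarrow> nat \<Rightarrow> nat \<Rightarrow> nat" where
  "revp a b x = (if a \<le> x \<and> x \<le> b then a + b - x else x)"

lemma revp_step: "a < b \<Longrightarrow> revp a b = Transposition.transpose a b \<circ> revp (Suc a) (b - 1)"
  by (auto simp: revp_def fun_eq_iff transpose_def)

lemma revp_triv: "b \<le> a \<Longrightarrow> revp a b = id"
  by (auto simp: revp_def fun_eq_iff)

lemma revp_perm_aux: "\<forall>a b. Suc b - a = d \<longrightarrow>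
   revp a b permutes {a..b} \<and> (evenperm (revp a b) \<longleftrightarrow> even ((Suc b - a) div 2))"
proof (induction d rule: less_induct)
  case (less d)
  show ?case
  proof (intro allI impI)
    fix a b assume d: "Suc b - a = d"
    show "revp a b permutes {a..b} \<and> (evenperm (revp a b) \<longleftrightarrow> even ((Suc b - a) div 2))"
    proof (cases "a < b")
      case False
      then show ?thesis by (simp add: revp_triv permutes_id)
    next
      case True
      have IH: "revp (Suc a) (b - 1) permutes {Suc a..b-1} \<and>
         (evenperm (revp (Suc a) (b-1)) \<longleftrightarrow> even ((Suc (b-1) - Suc a) div 2))"
        using less[rule_format, where a="Suc a" and b="b - 1", OF _ refl] True d by auto
      have p: "revp (Suc a) (b - 1) permutes {a..b}"
        using IH permutes_subset[of _ "{Suc a..b-1}" "{a..b}"] by auto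
      have t: "Transposition.transpose a b permutes {a..b}"
        using True by (intro permutes_swap_id) auto
      have pp: "permutation (revp (Suc a) (b - 1))" using permutes_imp_permutation[OF _ p] by simp
      have "evenperm (Transposition.transpose a b \<circ> revp (Suc a) (b - 1)) \<longleftrightarrow> (False = evenperm (revp (Suc a) (b - 1)))"
        using True pp by (subst evenperm_comp) (auto simp: evenperm_swap permutation_swap_id)
      moreover have "(Suc (b-1) - Suc a) div 2 = (Suc b - a) div 2 - 1" "(Suc b - a) div 2 \<ge> 1"
        using True by auto
      ultimately show ?thesis using IH revp_step[OF True] permutes_compose[OF p t]
        by auto
    qed
  qed
qed

lemma revp_perm: "revp 1 n permutes {1..n} \<and> (evenperm (revp 1 n) \<longleftrightarrow> even (n div 2))"
  using revp_perm_aux[of "Suc n - 1"] by auto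

lemma pcomp_apply: "pcomp a b x = (case a x of None \<Rightarrow> None | Some u \<Rightarrow> b u)"
  by (simp add: pcomp_def map_comp_def)

lemma pcomp_Some: "pcomp a b x = Some z \<longleftrightarrow> (\<exists>u. a x = Some u \<and> b u = Some z)"
  by (auto simp: pcomp_apply split: option.splits)

lemma dom_pcomp: "dom (pcomp a b) = {x. \<exists>u. a x = Some u \<and> u \<in> dom b}"
  by (auto simp: dom_def pcomp_Some)

lemma ran_pcomp: "ran (pcomp a b) = {z. \<exists>x u. a x = Some u \<and> b u = Some z}"
  by (auto simp: ran_def pcomp_Some)

lemma PI_pcomp: "a \<in> PI n \<Longrightarrow> b \<in> PI n \<Longrightarrow> pcomp a b \<in> PI n"
proof -
  assume a: "a \<in> PI n" and b: "b \<in> PI n"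
  have "dom (pcomp a b) \<subseteq> dom a" by (auto simp: dom_pcomp)
  moreover have "ran (pcomp a b) \<subseteq> ran b" by (auto simp: ran_def pcomp_Some)
  moreover have "inj_on (pcomp a b) (dom (pcomp a b))"
  proof (rule inj_onI)
    fix x1 x2 assume x1: "x1 \<in> dom (pcomp a b)" and x2: "x2 \<in> dom (pcomp a b)"
      and e: "pcomp a b x1 = pcomp a b x2"
    from x1 obtain u1 where u1: "a x1 = Some u1" "u1 \<in> dom b" by (auto simp: dom_pcomp)
    from x2 obtain u2 where u2: "a x2 = Some u2" "u2 \<in> dom b" by (auto simp: dom_pcomp)
    have "b u1 = b u2" using e u1 u2 by (simp add: pcomp_apply)
    moreover have "inj_on b (dom b)" using b by (simp add: PI_def)
    ultimately have "u1 = u2" using u1 u2 by (metis inj_onD)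
    moreover have "inj_on a (dom a)" using a by (simp add: PI_def)
    ultimately show "x1 = x2" using u1 u2 by (metis domI inj_onD)
  qed
  ultimately show ?thesis using a b unfolding PI_def by blast
qed

definition extends :: "(nat \<Rightarrow> nat) \<Rightarrow> (nat \<rightharpoonup> nat) \<Rightarrow> bool" where
  "extends \<sigma> \<alpha> = (\<forall>x\<in>dom \<alpha>. \<alpha> x = Some (\<sigma> x))"

lemma AI_iff: "\<alpha> \<in> AI n \<longleftrightarrow> \<alpha> \<in> PI n \<and> (\<exists>\<sigma>. \<sigma> permutes {1..n} \<and> evenperm \<sigma> \<and> extends \<sigma> \<alpha>)"
  by (simp add: AI_def extends_def)

lemma AI_pcomp: "a \<in> AI n \<Longrightarrow> b \<in> AI n \<Longrightarrow> pcomp a b \<in> AI n"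
proof -
  assume a: "a \<in> AI n" and b: "b \<in> AI n"
  then obtain s t where s: "s permutes {1..n}" "evenperm s" "extends s a"
    and t: "t permutes {1..n}" "evenperm t" "extends t b" by (auto simp: AI_iff)
  have "t \<circ> s permutes {1..n}" using s t by (simp add: permutes_compose)
  moreover have "evenperm (t \<circ> s)"
    using s t by (subst evenperm_comp) (auto intro: permutes_imp_permutation)
  moreover have "extends (t \<circ> s) (pcomp a b)"
    unfolding extends_def
  proof
    fix x assume "x \<in> dom (pcomp a b)"
    then obtain u where u: "a x = Some u" "u \<in> dom b" by (auto simp: dom_pcomp)
    then have "u = s x" using s(3) unfolding extends_def by (metis domI option.inject)
    then have "b u = Some (t (s x))" using t(3) u unfolding extends_def by auto
    then show "pcomp a b x = Some ((t \<circ> s) x)" using u by (simp add: pcomp_apply)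
  qed
  ultimately show ?thesis using a b PI_pcomp by (auto simp: AI_iff)
qed

lemma mono_pcomp_aux:
  assumes a: "\<And>x z. x \<in> dom a \<Longrightarrow> z \<in> dom a \<Longrightarrow> x < z \<Longrightarrow> P (the (a x)) (the (a z))"
    and b: "\<And>x z. x \<in> dom b \<Longrightarrow> z \<in> dom b \<Longrightarrow> P x z \<Longrightarrow> Q (the (b x)) (the (b z))"
    and x: "x \<in> dom (pcomp a b)" and z: "z \<in> dom (pcomp a b)" and xy: "x < z"
  shows "Q (the (pcomp a b x)) (the (pcomp a b z))"
proof -
  from x obtain u where u: "a x = Some u" "u \<in> dom b" by (auto simp: dom_pcomp)
  from z obtain v where v: "a z = Some v" "v \<in> dom b" by (auto simp: dom_pcomp)
  have "P u v" using a[of x z] u v xy by (auto simp: domI)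
  then have "Q (the (b u)) (the (b v))" using b u v by auto
  then show ?thesis using u v by (simp add: pcomp_apply)
qed

lemma mono_pcomp:
  assumes "order_preserving a \<or> order_reversing a" "order_preserving b \<or> order_reversing b"
  shows "order_preserving (pcomp a b) \<or> order_reversing (pcomp a b)"
  using assms
proof (elim disjE)
  assume pa: "order_preserving a" and pb: "order_preserving b"
  have A: "\<And>x z. x \<in> dom a \<Longrightarrow> z \<in> dom a \<Longrightarrow> x < z \<Longrightarrow> the (a x) < the (a z)"
    using pa unfolding order_preserving_def by blast
  have B: "\<And>x z. x \<in> dom b \<Longrightarrow> z \<in> dom b \<Longrightarrow> x < z \<Longrightarrow> the (b x) < the (b z)"
    using pb unfolding order_preserving_def by blast
  have "order_preserving (pcomp a b)" unfolding order_preserving_def[of "pcomp a b"]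
  proof (intro ballI impI)
    fix x z assume h: "x \<in> dom (pcomp a b)" "z \<in> dom (pcomp a b)" "x < z"
    show "the (pcomp a b x) < the (pcomp a b z)"
      by (rule mono_pcomp_aux[where P="(<)" and Q="(<)", OF A B h])
  qed
  then show ?thesis ..
next
  assume pa: "order_reversing a" and pb: "order_reversing b"
  have A: "\<And>x z. x \<in> dom a \<Longrightarrow> z \<in> dom a \<Longrightarrow> x < z \<Longrightarrow> the (a x) > the (a z)"
    using pa unfolding order_reversing_def by blast
  have B: "\<And>x z. x \<in> dom b \<Longrightarrow> z \<in> dom b \<Longrightarrow> x > z \<Longrightarrow> the (b x) < the (b z)"
    using pb unfolding order_reversing_def by blast
  have "order_preserving (pcomp a b)" unfolding order_preserving_def[of "pcomp a b"]
  proof (intro ballI impI)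
    fix x z assume h: "x \<in> dom (pcomp a b)" "z \<in> dom (pcomp a b)" "x < z"
    show "the (pcomp a b x) < the (pcomp a b z)"
      by (rule mono_pcomp_aux[where P="(>)" and Q="(<)", OF A B h])
  qed
  then show ?thesis ..
next
  assume pa: "order_preserving a" and pb: "order_reversing b"
  have A: "\<And>x z. x \<in> dom a \<Longrightarrow> z \<in> dom a \<Longrightarrow> x < z \<Longrightarrow> the (a x) < the (a z)"
    using pa unfolding order_preserving_def by blast
  have B: "\<And>x z. x \<in> dom b \<Longrightarrow> z \<in> dom b \<Longrightarrow> x < z \<Longrightarrow> the (b x) > the (b z)"
    using pb unfolding order_reversing_def by blast
  have "order_reversing (pcomp a b)" unfolding order_reversing_def[of "pcomp a b"]
  proof (intro ballI impI)
    fix x z assume h: "x \<in> dom (pcomp a b)" "z \<in> dom (pcomp a b)" "x < z"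
    show "the (pcomp a b x) > the (pcomp a b z)"
      by (rule mono_pcomp_aux[where P="(<)" and Q="(>)", OF A B h])
  qed
  then show ?thesis ..
next
  assume pa: "order_reversing a" and pb: "order_preserving b"
  have A: "\<And>x z. x \<in> dom a \<Longrightarrow> z \<in> dom a \<Longrightarrow> x < z \<Longrightarrow> the (a x) > the (a z)"
    using pa unfolding order_reversing_def by blast
  have B: "\<And>x z. x \<in> dom b \<Longrightarrow> z \<in> dom b \<Longrightarrow> x > z \<Longrightarrow> the (b x) > the (b z)"
    using pb unfolding order_preserving_def by blast
  have "order_reversing (pcomp a b)" unfolding order_reversing_def[of "pcomp a b"]
  proof (intro ballI impI)
    fix x z assume h: "x \<in> dom (pcomp a b)" "z \<in> dom (pcomp a b)" "x < z"
    show "the (pcomp a b x) > the (pcomp a b z)"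
      by (rule mono_pcomp_aux[where P="(>)" and Q="(>)", OF A B h])
  qed
  then show ?thesis ..
qed

lemma uniq_core_pres:
  assumes "order_preserving g" "order_preserving d" "\<forall>w<x. g w = d w"
    "g x = Some u" "d x = Some v" "u < v" "u \<in> ran d"
  shows False
proof -
  obtain z where z: "d z = Some u" using assms(7) by (auto simp: ran_def)
  consider "z < x" | "z = x" | "x < z" by linarith
  then show False
  proof cases
    case 1
    then have "g z = Some u" using assms(3) z by auto
    then show False using assms(1,4) 1 unfolding order_preserving_def by (metis domI less_irrefl option.sel)
  next
    case 2 then show False using z assms(5,6) by simp
  next
    case 3 then show False using assms(2,5,6) z unfolding order_preserving_def
      by (metis domI not_less_iff_gr_or_eq option.sel)
  qed
qed

lemma uniq_core_rev:
  assumes "order_reversing g" "order_reversing d" "\<forall>w<x. g w = d w"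
    "g x = Some u" "d x = Some v" "u < v" "v \<in> ran g"
  shows False
proof -
  obtain z where z: "g z = Some v" using assms(7) by (auto simp: ran_def)
  consider "z < x" | "z = x" | "x < z" by linarith
  then show False
  proof cases
    case 1
    then have "d z = Some v" using assms(3) z by auto
    then show False using assms(2,5) 1 unfolding order_reversing_def by (metis domI less_irrefl option.sel)
  next
    case 2 then show False using z assms(4,6) by simp
  next
    case 3 then show False using assms(1,4,6) z unfolding order_reversing_def
      by (metis domI not_less_iff_gr_or_eq option.sel)
  qed
qed

lemma uniq_mono:
  assumes dr: "dom g = dom d" "ran g = ran d"
    and m: "(order_preserving g \<and> order_preserving d) \<or> (order_reversing g \<and> order_reversing d)"
  shows "g = d"
proof (rule ccontr)
  assume "g \<noteq> d"
  then have ex: "\<exists>x. g x \<noteq> d x" by auto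
  define x where "x = (LEAST x. g x \<noteq> d x)"
  have gx: "g x \<noteq> d x" unfolding x_def using LeastI_ex[OF ex] .
  have below: "\<forall>w<x. g w = d w" unfolding x_def using not_less_Least by blast
  have below': "\<forall>w<x. d w = g w" using below by auto
  have "x \<in> dom g"
  proof (rule ccontr)
    assume "x \<notin> dom g"
    then have "g x = None" "d x = None" using dr by auto
    then show False using gx by simp
  qed
  then obtain u where u: "g x = Some u" by auto
  have "x \<in> dom d" using \<open>x \<in> dom g\<close> dr by simp
  then obtain v where v: "d x = Some v" by auto
  note uv = u v
  have "u \<noteq> v" using gx uv by auto
  moreover have "u \<in> ran d" "v \<in> ran g" using uv dr by (auto simp: ran_def)
  ultimately show False
    using m uniq_core_pres[OF _ _ below uv] uniq_core_pres[OF _ _ below' uv(2,1)]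
      uniq_core_rev[OF _ _ below uv] uniq_core_rev[OF _ _ below' uv(2,1)]
    by (metis linorder_neqE_nat)
qed

definition mapon :: "(nat \<Rightarrow> nat) \<Rightarrow> nat set \<Rightarrow> (nat \<rightharpoonup> nat)" where
  "mapon f S = (\<lambda>x. if x \<in> S then Some (f x) else None)"

lemma dom_mapon[simp]: "dom (mapon f S) = S"
  by (auto simp: mapon_def dom_def)

lemma ran_mapon[simp]: "ran (mapon f S) = f ` S"
  by (auto simp: mapon_def ran_def)

lemma mapon_PI: "S \<subseteq> {1..n} \<Longrightarrow> f ` S \<subseteq> {1..n} \<Longrightarrow> inj_on f S \<Longrightarrow> mapon f S \<in> PI n"
proof -
  assume h: "S \<subseteq> {1..n}" "f ` S \<subseteq> {1..n}" "inj_on f S"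
  have "inj_on (mapon f S) S" using h(3) by (auto simp: inj_on_def mapon_def)
  then show ?thesis using h by (simp add: PI_def)
qed

lemma mapon_pres: "(\<And>x z. x \<in> S \<Longrightarrow> z \<in> S \<Longrightarrow> x < z \<Longrightarrow> f x < f z) \<Longrightarrow> order_preserving (mapon f S)"
  unfolding order_preserving_def by (auto simp: mapon_def)

lemma mapon_rev: "(\<And>x z. x \<in> S \<Longrightarrow> z \<in> S \<Longrightarrow> x < z \<Longrightarrow> f x > f z) \<Longrightarrow> order_reversing (mapon f S)"
  unfolding order_reversing_def by (auto simp: mapon_def)

lemma mapon_extends: "extends f (mapon f S)"
  unfolding extends_def dom_mapon by (simp add: mapon_def)

lemma cyc_mono: "x \<noteq> a \<Longrightarrow> z \<noteq> a \<Longrightarrow> x < z \<Longrightarrow> cyc a b x < cyc a b z"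
  unfolding cyc_def by auto

lemma revp_mono: "1 \<le> x \<Longrightarrow> z \<le> n \<Longrightarrow> x < z \<Longrightarrow> revp 1 n x > revp 1 n z"
  unfolding revp_def by auto

lemma cyc_a: "cyc a b a = b" by (simp add: cyc_def)

lemma revp_a: "a \<in> {1..n} \<Longrightarrow> revp 1 n a = n + 1 - a" by (simp add: revp_def)

lemma perm_image_Xs:
  assumes "p permutes {1..n}" "p a = b"
  shows "p ` Xs n a = Xs n b"
proof -
  have "inj p" using assms(1) by (rule permutes_inj)
  then have "p ` ({1..n} - {a}) = p ` {1..n} - p ` {a}" by (rule image_set_diff)
  then show ?thesis using assms permutes_image[OF assms(1)] by (simp add: Xs_def)
qed

definition pres :: "nat \<Rightarrow> nat \<Rightarrow> nat \<Rightarrow> (nat \<rightharpoonup> nat)" where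
  "pres n a b = mapon (cyc a b) (Xs n a)"

definition rext :: "nat \<Rightarrow> nat \<Rightarrow> nat \<Rightarrow> nat \<Rightarrow> nat" where
  "rext n a b = cyc (n + 1 - a) b \<circ> revp 1 n"

definition revm :: "nat \<Rightarrow> nat \<Rightarrow> nat \<Rightarrow> (nat \<rightharpoonup> nat)" where
  "revm n a b = mapon (rext n a b) (Xs n a)"

lemma rext_perm:
  assumes "a \<in> {1..n}" "b \<in> {1..n}"
  shows "rext n a b permutes {1..n}" "evenperm (rext n a b) \<longleftrightarrow> (even (n + 1 - a + b) = even (n div 2))"
    "rext n a b a = b"
proof -
  have c: "cyc (n + 1 - a) b permutes {1..n}" "evenperm (cyc (n + 1 - a) b) \<longleftrightarrow> even (n + 1 - a + b)"
  proof -
    have "n + 1 - a \<in> {1..n}" using assms by auto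
    then show "cyc (n + 1 - a) b permutes {1..n}" "evenperm (cyc (n + 1 - a) b) \<longleftrightarrow> even (n + 1 - a + b)"
      using cyc_perm[OF _ assms(2)] by blast+
  qed
  have r: "revp 1 n permutes {1..n}" "evenperm (revp 1 n) \<longleftrightarrow> even (n div 2)" using revp_perm by auto
  show "rext n a b permutes {1..n}" unfolding rext_def using c r by (simp add: permutes_compose)
  show "evenperm (rext n a b) \<longleftrightarrow> (even (n + 1 - a + b) = even (n div 2))"
    unfolding rext_def using c r
    by (subst evenperm_comp) (auto intro: permutes_imp_permutation)
  have "revp 1 n a = n + 1 - a" using revp_a[of a n] assms by simp
  then show "rext n a b a = b" by (simp add: rext_def cyc_a)
qed

lemma pres_props:
  assumes "a \<in> {1..n}" "b \<in> {1..n}"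
  shows "pres n a b \<in> PI n" "order_preserving (pres n a b)" "dom (pres n a b) = Xs n a"
    "ran (pres n a b) = Xs n b" "extends (cyc a b) (pres n a b)"
proof -
  have p: "cyc a b permutes {1..n}" using cyc_perm assms by blast
  have im: "cyc a b ` Xs n a = Xs n b" using perm_image_Xs[OF p] cyc_a by blast
  show "pres n a b \<in> PI n" unfolding pres_def
    by (rule mapon_PI) (use im permutes_inj[OF p] in \<open>auto simp: Xs_def intro: inj_on_subset\<close>)
  show "order_preserving (pres n a b)" unfolding pres_def
    by (rule mapon_pres) (auto simp: Xs_def cyc_mono)
  show "dom (pres n a b) = Xs n a" by (simp add: pres_def)
  show "ran (pres n a b) = Xs n b" using im by (simp add: pres_def)
  show "extends (cyc a b) (pres n a b)" by (simp add: pres_def mapon_extends)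
qed

lemma revp_Xs: "a \<in> {1..n} \<Longrightarrow> x \<in> Xs n a \<Longrightarrow> revp 1 n x \<in> Xs n (n + 1 - a)"
  unfolding Xs_def revp_def by auto

lemma revm_props:
  assumes "a \<in> {1..n}" "b \<in> {1..n}"
  shows "revm n a b \<in> PI n" "order_reversing (revm n a b)" "dom (revm n a b) = Xs n a"
    "ran (revm n a b) = Xs n b" "extends (rext n a b) (revm n a b)"
proof -
  have p: "rext n a b permutes {1..n}" "rext n a b a = b" using rext_perm assms by blast+
  have im: "rext n a b ` Xs n a = Xs n b" using perm_image_Xs[OF p] .
  show "revm n a b \<in> PI n" unfolding revm_def
    by (rule mapon_PI) (use im permutes_inj[OF p(1)] in \<open>auto simp: Xs_def intro: inj_on_subset\<close>)
  show "order_reversing (revm n a b)" unfolding revm_def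
  proof (rule mapon_rev)
    fix x z assume h: "x \<in> Xs n a" "z \<in> Xs n a" "x < z"
    have "revp 1 n x > revp 1 n z" using h by (intro revp_mono) (auto simp: Xs_def)
    moreover have "revp 1 n x \<noteq> n + 1 - a" "revp 1 n z \<noteq> n + 1 - a"
      using revp_Xs[OF assms(1)] h by (auto simp: Xs_def)
    ultimately show "rext n a b x > rext n a b z" unfolding rext_def
      using cyc_mono by auto
  qed
  show "dom (revm n a b) = Xs n a" by (simp add: revm_def)
  show "ran (revm n a b) = Xs n b" using im by (simp add: revm_def)
  show "extends (rext n a b) (revm n a b)" by (simp add: revm_def mapon_extends)
qed

lemma extends_ran: "extends s g \<Longrightarrow> ran g = s ` dom g"
  unfolding extends_def ran_def dom_def by force

lemma ext_unique:
  assumes "dom g = Xs n a" "ran g = Xs n b" "a \<in> {1..n}" "b \<in> {1..n}"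
    "s permutes {1..n}" "extends s g" "t permutes {1..n}" "extends t g"
  shows "s = t"
proof -
  have sa: "p a = b" if p: "p permutes {1..n}" "extends p g" for p
  proof -
    have "p ` Xs n a = Xs n b" using extends_ran[OF p(2)] assms(1,2) by simp
    moreover have "p a \<notin> p ` Xs n a" using permutes_inj[OF p(1)] by (auto simp: Xs_def inj_def)
    moreover have "p a \<in> {1..n}" using permutes_in_image[OF p(1)] assms(3) by blast
    ultimately show ?thesis by (auto simp: Xs_def)
  qed
  show ?thesis
  proof
    fix x
    consider "x \<notin> {1..n}" | "x = a" | "x \<in> Xs n a" by (auto simp: Xs_def)
    then show "s x = t x"
    proof cases
      case 1 then show ?thesis using assms(5,7) by (simp add: permutes_not_in)
    next
      case 2 then show ?thesis using sa[OF assms(5,6)] sa[OF assms(7,8)] by simp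
    next
      case 3 then show ?thesis using assms(1,6,8) by (auto simp: extends_def)
    qed
  qed
qed

lemma AI_rank1:
  assumes "g \<in> PI n" "dom g = Xs n a" "ran g = Xs n b" "a \<in> {1..n}" "b \<in> {1..n}"
    "r permutes {1..n}" "extends r g"
  shows "g \<in> AI n \<longleftrightarrow> evenperm r"
proof
  assume "g \<in> AI n"
  then obtain s where s: "s permutes {1..n}" "evenperm s" "extends s g" by (auto simp: AI_iff)
  then have "s = r" using ext_unique[OF assms(2-5) s(1,3) assms(6,7)] by simp
  then show "evenperm r" using s by simp
next
  assume "evenperm r"
  then show "g \<in> AI n" using assms by (auto simp: AI_iff)
qed

lemma pres_AM:
  assumes "a \<in> {1..n}" "b \<in> {1..n}"
  shows "pres n a b \<in> AM n \<longleftrightarrow> even (a + b)"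
proof -
  have "pres n a b \<in> AI n \<longleftrightarrow> evenperm (cyc a b)"
    using pres_props[OF assms] cyc_perm[OF assms] assms by (intro AI_rank1[where a=a and b=b]) auto
  moreover have "pres n a b \<in> PMI n" using pres_props[OF assms] by (simp add: PMI_def)
  ultimately show ?thesis using cyc_perm[OF assms] by (simp add: AM_def)
qed

lemma revm_AM:
  assumes "n mod 4 = 3" "a \<in> {1..n}" "b \<in> {1..n}"
  shows "revm n a b \<in> AM n \<longleftrightarrow> odd (a + b)"
proof -
  have "revm n a b \<in> AI n \<longleftrightarrow> evenperm (rext n a b)"
    using revm_props[OF assms(2,3)] rext_perm[OF assms(2,3)] assms by (intro AI_rank1[where a=a and b=b]) auto
  moreover have "odd (n div 2)" using assms(1) by presburger
  moreover have "even (n + 1 - a + b) \<longleftrightarrow> even (a + b)"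
  proof -
    have "a \<le> n" "n mod 4 = 3" using assms by auto
    then show ?thesis by presburger
  qed
  ultimately have "revm n a b \<in> AI n \<longleftrightarrow> odd (a + b)"
    using rext_perm(2)[OF assms(2,3)] by blast
  moreover have "revm n a b \<in> PMI n" using revm_props[OF assms(2,3)] by (simp add: PMI_def)
  ultimately show ?thesis by (simp add: AM_def)
qed

definition am1 :: "nat \<Rightarrow> nat \<Rightarrow> nat \<Rightarrow> (nat \<rightharpoonup> nat)" where
  "am1 n a b = (if even (a + b) then pres n a b else revm n a b)"

lemma am1_AM: "n mod 4 = 3 \<Longrightarrow> a \<in> {1..n} \<Longrightarrow> b \<in> {1..n} \<Longrightarrow> am1 n a b \<in> AM n"
  using pres_AM revm_AM by (auto simp: am1_def)

lemma am1_dom_ran: "a \<in> {1..n} \<Longrightarrow> b \<in> {1..n} \<Longrightarrow> dom (am1 n a b) = Xs n a \<and> ran (am1 n a b) = Xs n b"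
  using pres_props revm_props by (auto simp: am1_def)

lemma AM_rank1_unique:
  assumes "n mod 4 = 3" "g \<in> AM n" "dom g = Xs n a" "ran g = Xs n b" "a \<in> {1..n}" "b \<in> {1..n}"
  shows "g = am1 n a b"
proof -
  have m: "order_preserving g \<or> order_reversing g" using assms(2) by (auto simp: AM_def PMI_def)
  then show ?thesis
  proof
    assume "order_preserving g"
    then have "g = pres n a b" using pres_props[OF assms(5,6)] assms(3,4)
      by (intro uniq_mono) auto
    then show ?thesis using pres_AM[OF assms(5,6)] assms(2) by (auto simp: am1_def)
  next
    assume "order_reversing g"
    then have "g = revm n a b" using revm_props[OF assms(5,6)] assms(3,4)
      by (intro uniq_mono) auto
    then show ?thesis using revm_AM[OF assms(1,5,6)] assms(2) by (auto simp: am1_def)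
  qed
qed

lemma pid_mapon: "pid n = mapon (\<lambda>x. x) {1..n}"
  by (simp add: pid_def mapon_def)

lemma pid_AM: "pid n \<in> AM n"
proof -
  have "pid n \<in> PI n" unfolding pid_mapon by (rule mapon_PI) auto
  moreover have "extends id (pid n)" unfolding extends_def
  proof
    fix x assume "x \<in> dom (pid n)"
    then have "x \<in> {1..n}" by (simp add: pid_def domIff split: if_splits)
    then show "pid n x = Some (id x)" by (simp add: pid_def)
  qed
  moreover have "order_preserving (pid n)" unfolding pid_mapon by (rule mapon_pres) auto
  ultimately show ?thesis by (auto simp: AM_def PMI_def AI_iff intro!: exI[of _ id])
qed

lemma AM_pcomp: "a \<in> AM n \<Longrightarrow> b \<in> AM n \<Longrightarrow> pcomp a b \<in> AM n"
  unfolding AM_def PMI_def using AI_pcomp PI_pcomp mono_pcomp by auto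

lemma gen_AM: "A \<subseteq> AM n \<Longrightarrow> gen n A \<subseteq> AM n"
proof
  fix x assume "A \<subseteq> AM n" "x \<in> gen n A"
  then show "x \<in> AM n"
    by (induction rule: gen.induct[OF \<open>x \<in> gen n A\<close>]) (auto simp: pid_AM AM_pcomp)
qed

lemma pcomp_pid_right: "a \<in> PI n \<Longrightarrow> pcomp a (pid n) = a"
proof
  fix x assume a: "a \<in> PI n"
  show "pcomp a (pid n) x = a x"
  proof (cases "a x")
    case (Some u)
    then have "u \<in> ran a" by (auto simp: ran_def)
    then have "u \<in> {1..n}" using a by (auto simp: PI_def)
    then show ?thesis using Some by (simp add: pcomp_apply pid_def)
  qed (simp add: pcomp_apply)
qed

lemma pcomp_pid_left: "a \<in> PI n \<Longrightarrow> pcomp (pid n) a = a"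
proof
  fix x assume a: "a \<in> PI n"
  show "pcomp (pid n) a x = a x"
  proof (cases "x \<in> {1..n}")
    case False
    then have "x \<notin> dom a" using a by (auto simp: PI_def)
    then show ?thesis using False by (simp add: pcomp_apply pid_def domIff)
  qed (simp add: pcomp_apply pid_def)
qed

lemma AM_full:
  assumes n: "n mod 4 = 3" and g: "g \<in> AM n" and r: "ran g = {1..n}"
  shows "g = pid n"
proof -
  obtain s where s: "s permutes {1..n}" "evenperm s" "extends s g" using g by (auto simp: AM_def AI_iff)
  have gP: "g \<in> PI n" and m: "order_preserving g \<or> order_reversing g" using g by (auto simp: AM_def PMI_def)
  have "s ` dom g = s ` {1..n}" using extends_ran[OF s(3)] r permutes_image[OF s(1)] by simp
  moreover have "dom g \<subseteq> {1..n}" using gP by (simp add: PI_def)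
  ultimately have d: "dom g = {1..n}" using permutes_inj[OF s(1)] by (simp add: inj_image_eq_iff)
  show ?thesis using m
  proof
    assume "order_preserving g"
    moreover have "order_preserving (pid n)" unfolding pid_mapon by (rule mapon_pres) auto
    ultimately show ?thesis using d r unfolding pid_mapon by (intro uniq_mono) auto
  next
    assume rv: "order_reversing g"
    have rp: "revp 1 n permutes {1..n}" "evenperm (revp 1 n) \<longleftrightarrow> even (n div 2)" using revp_perm by auto
    have "order_reversing (mapon (revp 1 n) {1..n})" by (rule mapon_rev, rule revp_mono) auto
    then have "g = mapon (revp 1 n) {1..n}" using d r rv permutes_image[OF rp(1)] by (intro uniq_mono) auto
    then have "extends (revp 1 n) g" by (simp add: mapon_extends)
    then have "s = revp 1 n"
    proof -
      assume e: "extends (revp 1 n) g"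
      show ?thesis
      proof
        fix x show "s x = revp 1 n x"
        proof (cases "x \<in> {1..n}")
          case True then show ?thesis using e s(3) d by (auto simp: extends_def)
        next
          case False then show ?thesis using s(1) rp(1) by (simp add: permutes_not_in)
        qed
      qed
    qed
    moreover have "odd (n div 2)" using n by presburger
    ultimately show ?thesis using s(2) rp(2) by simp
  qed
qed

lemma finite_PI: "finite (PI n)"
proof -
  have "PI n \<subseteq> (\<Union>D\<in>Pow {1..n}. {m. dom m = D \<and> ran m \<subseteq> {1..n}})"
    by (auto simp: PI_def)
  moreover have "finite (\<Union>D\<in>Pow {1..n}. {m. dom m = D \<and> ran m \<subseteq> {1..n}})"
    by (intro finite_UN_I) (auto intro: finite_set_of_finite_maps finite_subset)
  ultimately show ?thesis by (rule finite_subset)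
qed

lemma Xs_between: "Xs n j \<subseteq> B \<Longrightarrow> B \<subseteq> {1..n} \<Longrightarrow> B = Xs n j \<or> B = {1..n}"
proof (cases "j \<in> B")
  case True
  assume "Xs n j \<subseteq> B" "B \<subseteq> {1..n}"
  then show ?thesis using True unfolding Xs_def by blast
next
  case False
  assume "Xs n j \<subseteq> B" "B \<subseteq> {1..n}"
  then show ?thesis using False unfolding Xs_def by blast
qed

lemma lb_aux:
  assumes gA: "generates n A (AM n)" and n: "n mod 4 = 3" and j: "j \<in> {1..n}"
    and c: "c \<in> gen n A" and rc: "ran c = Xs n j"
  shows "\<exists>a\<in>A. ran a = Xs n j"
  using c rc
proof (induction rule: gen.induct)
  case gen_id
  then have "j \<in> ran (pid n)" using j unfolding pid_mapon by simp
  moreover have "j \<notin> Xs n j" by (simp add: Xs_def)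
  ultimately show ?case using gen_id by simp
next
  case (gen_gen a)
  then show ?case by auto
next
  case (gen_mult a b)
  have aAM: "a \<in> AM n" and bAM: "b \<in> AM n" using gen_mult gA by (auto simp: generates_def)
  have "ran (pcomp a b) \<subseteq> ran b" by (auto simp: ran_def pcomp_Some)
  moreover have "ran b \<subseteq> {1..n}" using bAM by (simp add: AM_def AI_def PI_def)
  ultimately have "ran b = Xs n j \<or> ran b = {1..n}" using gen_mult.prems Xs_between by simp
  then show ?case
  proof
    assume "ran b = Xs n j" then show ?case using gen_mult.IH(2) by blast
  next
    assume "ran b = {1..n}"
    then have "b = pid n" using AM_full[OF n bAM] by simp
    then have "pcomp a b = a" using aAM pcomp_pid_right by (simp add: AM_def AI_def)
    then show ?case using gen_mult.IH(1) gen_mult.prems by simp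
  qed
qed

lemma lower_bound:
  assumes gA: "generates n A (AM n)" and n: "n mod 4 = 3"
  shows "finite A \<and> n \<le> card A"
proof -
  have AA: "A \<subseteq> AM n" using gA by (simp add: generates_def)
  have "A \<subseteq> PI n" using AA unfolding AM_def AI_def by blast
  then have fin: "finite A" using finite_PI by (rule finite_subset)
  have ex: "\<exists>a\<in>A. ran a = Xs n j" if j: "j \<in> {1..n}" for j
  proof -
    have "j + j = 2 * j" by simp
    then have "am1 n j j \<in> AM n" "ran (am1 n j j) = Xs n j"
      using am1_AM[OF n j j] am1_dom_ran[OF j j] by auto
    then show ?thesis using lb_aux[OF gA n j] gA by (auto simp: generates_def)
  qed
  define f where "f j = (SOME a. a \<in> A \<and> ran a = Xs n j)" for j
  have f: "f j \<in> A \<and> ran (f j) = Xs n j" if "j \<in> {1..n}" for j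
    unfolding f_def using someI_ex[OF ex[OF that, unfolded Bex_def]] .
  have "inj_on f {1..n}"
  proof (rule inj_onI)
    fix i j assume ij: "i \<in> {1..n}" "j \<in> {1..n}" "f i = f j"
    then have "Xs n i = Xs n j" using f[OF ij(1)] f[OF ij(2)] by simp
    moreover have "i \<notin> Xs n i" by (simp add: Xs_def)
    ultimately have "i \<notin> Xs n j" by simp
    then show "i = j" using ij(1) by (simp add: Xs_def)
  qed
  moreover have "f ` {1..n} \<subseteq> A" using f by auto
  ultimately have "card {1..n} \<le> card A" using fin by (intro card_inj_on_le) auto
  then show ?thesis using fin by simp
qed

lemma pcomp_assoc: "pcomp (pcomp a b) c = pcomp a (pcomp b c)"
proof
  fix x show "pcomp (pcomp a b) c x = pcomp a (pcomp b c) x"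
    by (cases "a x") (auto simp: pcomp_apply split: option.splits)
qed

lemma dom_pcomp_sub: "ran a \<subseteq> dom b \<Longrightarrow> dom (pcomp a b) = dom a"
proof
  show "dom (pcomp a b) \<subseteq> dom a" by (auto simp: dom_pcomp)
  assume r: "ran a \<subseteq> dom b"
  show "dom a \<subseteq> dom (pcomp a b)"
  proof
    fix x assume "x \<in> dom a"
    then obtain u where u: "a x = Some u" by auto
    then have "u \<in> ran a" by (auto simp: ran_def)
    then have "u \<in> dom b" using r by blast
    then show "x \<in> dom (pcomp a b)" using u by (auto simp: dom_pcomp)
  qed
qed

lemma ran_pcomp_sup: "dom b \<subseteq> ran a \<Longrightarrow> ran (pcomp a b) = ran b"
proof
  show "ran (pcomp a b) \<subseteq> ran b" by (auto simp: ran_def pcomp_Some)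
  assume d: "dom b \<subseteq> ran a"
  show "ran b \<subseteq> ran (pcomp a b)"
  proof
    fix z assume "z \<in> ran b"
    then obtain u where u: "b u = Some z" by (auto simp: ran_def)
    then have "u \<in> ran a" using d by blast
    then obtain x where "a x = Some u" by (auto simp: ran_def)
    then show "z \<in> ran (pcomp a b)" using u by (auto simp: ran_def pcomp_Some)
  qed
qed

lemma pp_pcomp: "order_preserving a \<Longrightarrow> order_preserving b \<Longrightarrow> order_preserving (pcomp a b)"
proof -
  assume pa: "order_preserving a" and pb: "order_preserving b"
  have A: "\<And>x z. x \<in> dom a \<Longrightarrow> z \<in> dom a \<Longrightarrow> x < z \<Longrightarrow> the (a x) < the (a z)"
    using pa unfolding order_preserving_def by blast
  have B: "\<And>x z. x \<in> dom b \<Longrightarrow> z \<in> dom b \<Longrightarrow> x < z \<Longrightarrow> the (b x) < the (b z)"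
    using pb unfolding order_preserving_def by blast
  show "order_preserving (pcomp a b)" unfolding order_preserving_def[of "pcomp a b"]
  proof (intro ballI impI)
    fix x z assume h: "x \<in> dom (pcomp a b)" "z \<in> dom (pcomp a b)" "x < z"
    show "the (pcomp a b x) < the (pcomp a b z)"
      by (rule mono_pcomp_aux[where P="(<)" and Q="(<)", OF A B h])
  qed
qed

lemma rr_pcomp: "order_reversing a \<Longrightarrow> order_reversing b \<Longrightarrow> order_preserving (pcomp a b)"
proof -
  assume pa: "order_reversing a" and pb: "order_reversing b"
  have A: "\<And>x z. x \<in> dom a \<Longrightarrow> z \<in> dom a \<Longrightarrow> x < z \<Longrightarrow> the (a x) > the (a z)"
    using pa unfolding order_reversing_def by blast
  have B: "\<And>x z. x \<in> dom b \<Longrightarrow> z \<in> dom b \<Longrightarrow> x > z \<Longrightarrow> the (b x) < the (b z)"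
    using pb unfolding order_reversing_def by blast
  show "order_preserving (pcomp a b)" unfolding order_preserving_def[of "pcomp a b"]
  proof (intro ballI impI)
    fix x z assume h: "x \<in> dom (pcomp a b)" "z \<in> dom (pcomp a b)" "x < z"
    show "the (pcomp a b x) < the (pcomp a b z)"
      by (rule mono_pcomp_aux[where P="(>)" and Q="(<)", OF A B h])
  qed
qed

definition pidon :: "nat set \<Rightarrow> (nat \<rightharpoonup> nat)" where
  "pidon S = mapon (\<lambda>x. x) S"

lemma pcomp_pidon_right: "ran a \<subseteq> S \<Longrightarrow> pcomp a (pidon S) = a"
proof
  fix x assume r: "ran a \<subseteq> S"
  show "pcomp a (pidon S) x = a x"
  proof (cases "a x")
    case (Some u)
    then have "u \<in> S" using r by (auto simp: ran_def)
    then show ?thesis using Some by (simp add: pcomp_apply pidon_def mapon_def)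
  qed (simp add: pcomp_apply)
qed

lemma pcomp_pidon_left: "dom a \<subseteq> S \<Longrightarrow> pcomp (pidon S) a = a"
proof
  fix x assume d: "dom a \<subseteq> S"
  show "pcomp (pidon S) a x = a x"
  proof (cases "x \<in> S")
    case False
    then have "x \<notin> dom a" using d by auto
    then show ?thesis using False by (simp add: pcomp_apply pidon_def mapon_def domIff)
  qed (simp add: pcomp_apply pidon_def mapon_def)
qed

lemma pidon_inter: "pcomp (pidon S) (pidon T) = pidon (S \<inter> T)"
proof
  fix x show "pcomp (pidon S) (pidon T) x = pidon (S \<inter> T) x"
    by (simp add: pcomp_apply pidon_def mapon_def)
qed

lemma am1_same: "am1 n i i = pidon (Xs n i)"
proof -
  have "even (i + i)" by simp
  then show ?thesis by (simp add: am1_def pres_def pidon_def cyc_same id_def)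
qed

lemma am1_pcomp:
  assumes n: "n mod 4 = 3" and ijk: "i \<in> {1..n}" "j \<in> {1..n}" "k \<in> {1..n}"
  shows "pcomp (am1 n i j) (am1 n j k) = am1 n i k"
proof (rule AM_rank1_unique[OF n _ _ _ ijk(1,3)])
  show "pcomp (am1 n i j) (am1 n j k) \<in> AM n" using am1_AM n ijk by (intro AM_pcomp) auto
  have d1: "dom (am1 n i j) = Xs n i" "ran (am1 n i j) = Xs n j" using am1_dom_ran ijk by blast+
  have d2: "dom (am1 n j k) = Xs n j" "ran (am1 n j k) = Xs n k" using am1_dom_ran ijk by blast+
  show "dom (pcomp (am1 n i j) (am1 n j k)) = Xs n i" using d1 d2 by (simp add: dom_pcomp_sub)
  show "ran (pcomp (am1 n i j) (am1 n j k)) = Xs n k" using d1 d2 by (simp add: ran_pcomp_sup)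
qed

lemma y_lt:
  assumes n: "n mod 4 = 3" and i: "1 \<le> i" "i < n"
  shows "y n i = am1 n i (Suc i)"
proof -
  have ii: "i \<in> {1..n}" "Suc i \<in> {1..n}" using i by auto
  have "y n i = (THE \<alpha>. \<alpha> \<in> PI n \<and> order_reversing \<alpha> \<and> dom \<alpha> = Xs n i \<and> ran \<alpha> = Xs n (i+1))"
    using i by (simp add: y_def)
  also have "\<dots> = revm n i (Suc i)"
  proof (rule the_equality)
    show "revm n i (Suc i) \<in> PI n \<and> order_reversing (revm n i (Suc i)) \<and> dom (revm n i (Suc i)) = Xs n i \<and> ran (revm n i (Suc i)) = Xs n (i + 1)"
      using revm_props[OF ii] by simp
  next
    fix g assume "g \<in> PI n \<and> order_reversing g \<and> dom g = Xs n i \<and> ran g = Xs n (i + 1)"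
    then show "g = revm n i (Suc i)" using revm_props[OF ii] by (intro uniq_mono) auto
  qed
  also have "\<dots> = am1 n i (Suc i)" by (simp add: am1_def)
  finally show ?thesis .
qed

lemma y_n:
  assumes n: "n mod 4 = 3"
  shows "y n n = am1 n n 1"
proof -
  have ii: "n \<in> {1..n}" "1 \<in> {1..n}" using n by auto
  have "y n n = (THE \<alpha>. \<alpha> \<in> PI n \<and> order_preserving \<alpha> \<and> dom \<alpha> = Xs n n \<and> ran \<alpha> = Xs n 1)"
    by (simp add: y_def)
  also have "\<dots> = pres n n 1"
  proof (rule the_equality)
    show "pres n n 1 \<in> PI n \<and> order_preserving (pres n n 1) \<and> dom (pres n n 1) = Xs n n \<and> ran (pres n n 1) = Xs n 1"
      using pres_props[OF ii] by simp
  next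
    fix g assume "g \<in> PI n \<and> order_preserving g \<and> dom g = Xs n n \<and> ran g = Xs n 1"
    then show "g = pres n n 1" using pres_props[OF ii] by (intro uniq_mono) auto
  qed
  also have "\<dots> = am1 n n 1"
  proof -
    have "even (n + 1)" using n by presburger
    then show ?thesis by (simp add: am1_def)
  qed
  finally show ?thesis .
qed

lemma y_AM: "n mod 4 = 3 \<Longrightarrow> i \<in> {1..n} \<Longrightarrow> y n i \<in> AM n"
  using y_lt[of n i] y_n[of n] am1_AM[of n] by (cases "i < n") auto

lemma am1_gen:
  assumes n: "n mod 4 = 3" and ij: "i \<in> {1..n}" "j \<in> {1..n}"
  shows "am1 n i j \<in> gen n (y n ` {1..n})"
proof -
  let ?G = "gen n (y n ` {1..n})"
  have ys: "am1 n i (Suc i) \<in> ?G" if "1 \<le> i" "i < n" for i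
    using y_lt[OF n that] that by (metis atLeastAtMost_iff gen.gen_gen image_eqI less_imp_le)
  have yn: "am1 n n 1 \<in> ?G" using y_n[OF n] n by (metis atLeastAtMost_iff gen.gen_gen image_eqI le_refl mod_less_eq_dividend nat_le_linear le_trans one_le_numeral)
  have up: "am1 n i j \<in> ?G" if "1 \<le> i" "i < j" "j \<le> n" for i j
    using that(2,3)
  proof (induction j rule: less_induct)
    case (less j)
    show ?case
    proof (cases "j = Suc i")
      case True then show ?thesis using ys that less by auto
    next
      case False
      then have "i < j - 1" using less by auto
      then have "am1 n i (j - 1) \<in> ?G" using less by auto
      moreover have "am1 n (j - 1) j \<in> ?G" using ys[of "j - 1"] less \<open>i < j - 1\<close> that by auto
      ultimately have "pcomp (am1 n i (j - 1)) (am1 n (j - 1) j) \<in> ?G" by (rule gen.gen_mult)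
      moreover have "pcomp (am1 n i (j - 1)) (am1 n (j - 1) j) = am1 n i j"
        using am1_pcomp[OF n, of i "j - 1" j] that less \<open>i < j - 1\<close> by auto
      ultimately show ?thesis by simp
    qed
  qed
  have fromn: "am1 n n j \<in> ?G" if "j \<in> {1..n}" for j
  proof (cases "j = 1")
    case True then show ?thesis using yn by simp
  next
    case False
    then have "am1 n 1 j \<in> ?G" using up[of 1 j] that by auto
    then have "pcomp (am1 n n 1) (am1 n 1 j) \<in> ?G" using yn by (intro gen.gen_mult)
    moreover have "pcomp (am1 n n 1) (am1 n 1 j) = am1 n n j"
      using am1_pcomp[OF n, of n 1 j] that n by auto
    ultimately show ?thesis by simp
  qed
  show ?thesis
  proof (cases "i < j")
    case True then show ?thesis using up ij by auto
  next
    case False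
    show ?thesis
    proof (cases "i = n")
      case True then show ?thesis using fromn ij by simp
    next
      case iN: False
      then have "am1 n i n \<in> ?G" using up[of i n] ij by auto
      then have "pcomp (am1 n i n) (am1 n n j) \<in> ?G" using fromn[OF ij(2)] by (intro gen.gen_mult)
      moreover have "pcomp (am1 n i n) (am1 n n j) = am1 n i j"
        using am1_pcomp[OF n, of i n j] ij n by auto
      ultimately show ?thesis by simp
    qed
  qed
qed

lemma pidon_gen:
  assumes n: "n mod 4 = 3" and S: "S \<subseteq> {1..n}" "S \<noteq> {1..n}"
  shows "pidon S \<in> gen n (y n ` {1..n})"
proof -
  let ?G = "gen n (y n ` {1..n})"
  have "\<forall>C. finite C \<longrightarrow> C \<noteq> {} \<longrightarrow> C \<subseteq> {1..n} \<longrightarrow> pidon ({1..n} - C) \<in> ?G"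
  proof (intro allI impI)
    fix C :: "nat set" assume "finite C" "C \<noteq> {}" "C \<subseteq> {1..n}"
    then show "pidon ({1..n} - C) \<in> ?G"
    proof (induction C rule: finite_ne_induct)
      case (singleton x)
      then show ?case using am1_gen[OF n, of x x] am1_same[of n x] by (simp add: Xs_def)
    next
      case (insert x F)
      have "pcomp (pidon ({1..n} - F)) (pidon (Xs n x)) \<in> ?G"
        using insert am1_gen[OF n, of x x] am1_same[of n x] by (intro gen.gen_mult) auto
      moreover have "({1..n} - F) \<inter> Xs n x = {1..n} - insert x F" by (auto simp: Xs_def)
      ultimately show ?case by (simp add: pidon_inter)
    qed
  qed
  moreover have "S = {1..n} - ({1..n} - S)" using S by auto
  moreover have "{1..n} - S \<noteq> {}" using S by auto
  ultimately show ?thesis by (metis Diff_subset finite_Diff finite_atLeastAtMost)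
qed

lemma gap:
  assumes S: "S \<subseteq> {1..n}" and k: "card S + 2 \<le> n" and ne: "S \<noteq> {1..card S}"
  shows "\<exists>i. 1 \<le> i \<and> i + 2 \<le> n \<and> i \<notin> S \<and> (i + 1 \<in> S \<or> i + 2 \<in> S)"
proof -
  have fin: "finite S" using S finite_subset by blast
  have "\<exists>s\<in>S. s > card S"
  proof (rule ccontr)
    assume "\<not> (\<exists>s\<in>S. s > card S)"
    then have "S \<subseteq> {1..card S}" using S by (auto simp: not_less)
    then have "S = {1..card S}" using fin by (intro card_subset_eq) auto
    then show False using ne by simp
  qed
  then obtain s where s: "s \<in> S" "s > card S" by blast
  define Gs where "Gs = {x. 1 \<le> x \<and> x < s \<and> x \<notin> S}"
  have Gsne: "Gs \<noteq> {}"
  proof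
    assume G0: "Gs = {}"
    have "{1..s} \<subseteq> S"
    proof
      fix x assume x: "x \<in> {1..s}"
      show "x \<in> S"
      proof (cases "x = s")
        case True then show ?thesis using s by simp
      next
        case False
        then have "x < s" "1 \<le> x" using x by auto
        then show ?thesis using G0 unfolding Gs_def by blast
      qed
    qed
    then have "card {1..s} \<le> card S" using fin by (rule card_mono[rotated])
    then show False using s by simp
  qed
  have Gsfin: "finite Gs" unfolding Gs_def by (rule finite_subset[of _ "{..<s}"]) auto
  define i where "i = Max Gs"
  have i: "i \<in> Gs" unfolding i_def using Gsfin Gsne by (rule Max_in)
  have imax: "x \<le> i" if "x \<in> Gs" for x unfolding i_def using Gsfin that by (rule Max_ge)
  have i1: "i + 1 \<in> S"
  proof (cases "i + 1 = s")
    case True then show ?thesis using s by simp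
  next
    case False
    then have lt: "i + 1 < s" using i unfolding Gs_def by auto
    show ?thesis
    proof (rule ccontr)
      assume "i + 1 \<notin> S"
      then have "i + 1 \<in> Gs" using lt unfolding Gs_def by simp
      then show False using imax by fastforce
    qed
  qed
  show ?thesis
  proof (cases "i + 2 \<le> n")
    case True then show ?thesis using i i1 unfolding Gs_def by blast
  next
    case False
    have "s \<le> n" using s S by auto
    moreover have "i < s" using i unfolding Gs_def by simp
    ultimately have iN: "i + 1 = n" using False by simp
    define H where "H = {x. 1 \<le> x \<and> x \<le> n - 2 \<and> x \<notin> S}"
    have Hne: "H \<noteq> {}"
    proof
      assume H0: "H = {}"
      have "{1..n-2} \<subseteq> S"
      proof
        fix x assume "x \<in> {1..n-2}"
        then show "x \<in> S" using H0 unfolding H_def by auto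
      qed
      moreover have "n \<in> S" using i1 iN by simp
      ultimately have "insert n {1..n-2} \<subseteq> S" by simp
      then have "card (insert n {1..n-2}) \<le> card S" using fin by (rule card_mono[rotated])
      moreover have "card (insert n {1..n-2}) = n - 1" using k by simp
      ultimately show False using k by simp
    qed
    have Hfin: "finite H" unfolding H_def by (rule finite_subset[of _ "{..n}"]) auto
    define h where "h = Max H"
    have h: "h \<in> H" unfolding h_def using Hfin Hne by (rule Max_in)
    have hmax: "x \<le> h" if "x \<in> H" for x unfolding h_def using Hfin that by (rule Max_ge)
    show ?thesis
    proof (cases "h = n - 2")
      case True
      then have "h + 2 = n" using k by simp
      then show ?thesis using h i1 iN unfolding H_def by auto
    next
      case False
      then have hl: "h + 1 \<le> n - 2" using h unfolding H_def by auto
      have "h + 1 \<in> S"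
      proof (rule ccontr)
        assume "h + 1 \<notin> S"
        then have "h + 1 \<in> H" using hl unfolding H_def by simp
        then show False using hmax by fastforce
      qed
      then show ?thesis using h hl unfolding H_def by auto
    qed
  qed
qed

lemma cyc_inv: "cyc b a (cyc a b x) = x"
  unfolding cyc_def by auto

lemma card_ran_PI: "g \<in> PI n \<Longrightarrow> card (ran g) = card (dom g)"
proof -
  assume g: "g \<in> PI n"
  have "ran g = (\<lambda>x. the (g x)) ` dom g" by (force simp: ran_def dom_def)
  moreover have "inj_on (\<lambda>x. the (g x)) (dom g)"
  proof (rule inj_onI)
    fix x z assume "x \<in> dom g" "z \<in> dom g" "the (g x) = the (g z)"
    then have "g x = g z" by auto
    then show "x = z" using g \<open>x \<in> dom g\<close> \<open>z \<in> dom g\<close> by (auto simp: PI_def inj_on_def)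
  qed
  ultimately show ?thesis by (simp add: card_image)
qed

lemma dom_pcomp_mapon: "dom (pcomp (mapon h S) b) = {x \<in> S. h x \<in> dom b}"
  by (auto simp: dom_pcomp mapon_def)

lemma ran_pcomp_mapon: "ran (pcomp a (mapon h S)) = h ` (ran a \<inter> S)"
  unfolding ran_pcomp by (auto simp: mapon_def ran_def split: if_splits)

lemma cyc_le: "i \<le> j \<Longrightarrow> x \<noteq> i \<Longrightarrow> cyc i j x \<le> x"
  unfolding cyc_def by auto

lemma cyc_lt: "i < x \<Longrightarrow> x \<le> j \<Longrightarrow> cyc i j x < x"
  unfolding cyc_def by auto

lemma sum_cyc_less:
  assumes fin: "finite D" and iD: "i \<notin> D" and ex: "i + 1 \<in> D \<or> i + 2 \<in> D"
  shows "sum id (cyc i (i + 2) ` D) < sum id D"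
proof -
  have "inj_on (cyc i (i + 2)) D" by (metis cyc_inv inj_on_inverseI)
  then have "sum id (cyc i (i + 2) ` D) = sum (cyc i (i + 2)) D" by (simp add: sum.reindex)
  also have "\<dots> < sum id D"
  proof (rule sum_strict_mono_ex1[OF fin])
    show "\<forall>x\<in>D. cyc i (i + 2) x \<le> id x"
    proof
      fix x assume "x \<in> D"
      then have "x \<noteq> i" using iD by auto
      then show "cyc i (i + 2) x \<le> id x" using cyc_le[of i "i + 2" x] by simp
    qed
    show "\<exists>x\<in>D. cyc i (i + 2) x < id x"
      using ex cyc_lt[of i "i + 1" "i + 2"] cyc_lt[of i "i + 2" "i + 2"] by auto
  qed
  finally show ?thesis .
qed

lemma pres_gen_aux:
  assumes n: "n mod 4 = 3"
  shows "g \<in> PI n \<Longrightarrow> order_preserving g \<Longrightarrow> card (dom g) + 2 \<le> n \<Longrightarrow> g \<in> gen n (y n ` {1..n})"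
proof (induction "sum id (dom g) + sum id (ran g)" arbitrary: g rule: less_induct)
  case less
  let ?G = "gen n (y n ` {1..n})"
  define D where "D = dom g"
  define R where "R = ran g"
  define k where "k = card D"
  have DS: "D \<subseteq> {1..n}" "R \<subseteq> {1..n}" using less.prems(1) by (auto simp: PI_def D_def R_def)
  have fin: "finite D" "finite R" using DS finite_subset by blast+
  have kR: "card R = k" unfolding R_def k_def D_def using card_ran_PI[OF less.prems(1)] .
  have kn: "k + 2 \<le> n" using less.prems(3) by (simp add: k_def D_def)
  have n3: "n \<ge> 3" using n by presburger
  show ?case
  proof (cases "D = {1..k} \<and> R = {1..k}")
    case True
    have "g = pidon {1..k}"
    proof (rule uniq_mono)
      show "dom g = dom (pidon {1..k})" "ran g = ran (pidon {1..k})"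
        using True by (simp_all add: pidon_def D_def R_def)
      have "order_preserving (pidon {1..k})" unfolding pidon_def by (rule mapon_pres) auto
      then show "order_preserving g \<and> order_preserving (pidon {1..k}) \<or>
        order_reversing g \<and> order_reversing (pidon {1..k})" using less.prems(2) by simp
    qed
    moreover have "n \<in> {1..n}" "n \<notin> {1..k}" using kn n3 by auto
    then have "{1..k} \<noteq> {1..n}" by blast
    ultimately show ?thesis using pidon_gen[OF n] kn by auto
  next
    case False
    then show ?thesis
    proof (elim disjE[OF de_Morgan_conj[THEN iffD1]])
      assume "D \<noteq> {1..k}"
      then have "D \<noteq> {1..card D}" "card D + 2 \<le> n" using kn k_def by auto
      then obtain i where i: "1 \<le> i" "i + 2 \<le> n" "i \<notin> D" "i + 1 \<in> D \<or> i + 2 \<in> D"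
        using gap[OF DS(1)] by blast
      have ii: "i \<in> {1..n}" "i + 2 \<in> {1..n}" using i by auto
      have ev: "even (i + (i + 2))" "even (i + 2 + i)" by auto
      define f where "f = pres n i (i + 2)"
      define fi where "fi = pres n (i + 2) i"
      have fG: "f \<in> ?G" "fi \<in> ?G" using am1_gen[OF n ii] am1_gen[OF n ii(2,1)] ev
        by (simp_all add: f_def fi_def am1_def)
      have ffi: "pcomp f fi = pidon (Xs n i)"
        using am1_pcomp[OF n ii(1) ii(2) ii(1)] ev am1_same[of n i] by (simp add: f_def fi_def am1_def)
      define g' where "g' = pcomp fi g"
      have DX: "D \<subseteq> Xs n i" using DS i by (auto simp: Xs_def)
      have g'PI: "g' \<in> PI n" unfolding g'_def using pres_props(1)[OF ii(2,1)] less.prems(1) fi_def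
        by (simp add: PI_pcomp)
      have g'p: "order_preserving g'" unfolding g'_def fi_def
        using pres_props(2)[OF ii(2,1)] less.prems(2) by (rule pp_pcomp)
      have rg': "ran g' = R" unfolding g'_def R_def
        using pres_props(4)[OF ii(2,1)] DX by (intro ran_pcomp_sup) (simp add: fi_def D_def)
      have dg': "dom g' = cyc i (i + 2) ` D"
      proof -
        have "dom g' = {x \<in> Xs n (i + 2). cyc (i + 2) i x \<in> D}"
          unfolding g'_def fi_def pres_def dom_pcomp_mapon D_def ..
        also have "\<dots> = cyc i (i + 2) ` D"
        proof
          show "{x \<in> Xs n (i + 2). cyc (i + 2) i x \<in> D} \<subseteq> cyc i (i + 2) ` D"
          proof
            fix x assume "x \<in> {x \<in> Xs n (i + 2). cyc (i + 2) i x \<in> D}"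
            then have "cyc (i + 2) i x \<in> D" by simp
            moreover have "x = cyc i (i + 2) (cyc (i + 2) i x)" by (simp add: cyc_inv)
            ultimately show "x \<in> cyc i (i + 2) ` D" by (metis image_eqI)
          qed
          have im: "cyc i (i + 2) ` Xs n i = Xs n (i + 2)"
            using perm_image_Xs[of "cyc i (i + 2)" n i "i + 2"] cyc_perm[OF ii] cyc_a by blast
          show "cyc i (i + 2) ` D \<subseteq> {x \<in> Xs n (i + 2). cyc (i + 2) i x \<in> D}"
          proof
            fix x assume "x \<in> cyc i (i + 2) ` D"
            then obtain w where w: "w \<in> D" "x = cyc i (i + 2) w" by blast
            then have "x \<in> Xs n (i + 2)" using DX im by blast
            moreover have "cyc (i + 2) i x = w" using w(2) by (simp add: cyc_inv)
            ultimately show "x \<in> {x \<in> Xs n (i + 2). cyc (i + 2) i x \<in> D}" using w(1) by simp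
          qed
        qed
        finally show ?thesis .
      qed
      have "card (dom g') = k" unfolding dg' k_def
        by (rule card_image) (metis cyc_inv inj_on_inverseI)
      then have kg': "card (dom g') + 2 \<le> n" using kn by simp
      have "sum id (dom g') + sum id (ran g') < sum id (dom g) + sum id (ran g)"
        using sum_cyc_less[OF fin(1) i(3,4)] dg' rg' by (simp add: D_def R_def)
      then have "g' \<in> ?G" by (rule less.hyps[OF _ g'PI g'p kg'])
      then have "pcomp f g' \<in> ?G" using fG by (intro gen.gen_mult)
      moreover have "pcomp f g' = g" unfolding g'_def
        using ffi DX by (simp add: pcomp_assoc[symmetric] pcomp_pidon_left D_def)
      ultimately show ?thesis by simp
    next
      assume "R \<noteq> {1..k}"
      then have "R \<noteq> {1..card R}" "card R + 2 \<le> n" using kn kR by auto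
      then obtain i where i: "1 \<le> i" "i + 2 \<le> n" "i \<notin> R" "i + 1 \<in> R \<or> i + 2 \<in> R"
        using gap[OF DS(2)] by blast
      have ii: "i \<in> {1..n}" "i + 2 \<in> {1..n}" using i by auto
      have ev: "even (i + (i + 2))" "even (i + 2 + i)" by auto
      define f where "f = pres n i (i + 2)"
      define fi where "fi = pres n (i + 2) i"
      have fG: "f \<in> ?G" "fi \<in> ?G" using am1_gen[OF n ii] am1_gen[OF n ii(2,1)] ev
        by (simp_all add: f_def fi_def am1_def)
      have ffi: "pcomp f fi = pidon (Xs n i)"
        using am1_pcomp[OF n ii(1) ii(2) ii(1)] ev am1_same[of n i] by (simp add: f_def fi_def am1_def)
      define g' where "g' = pcomp g f"
      have RX: "R \<subseteq> Xs n i" using DS i by (auto simp: Xs_def)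
      have g'PI: "g' \<in> PI n" unfolding g'_def using pres_props(1)[OF ii] less.prems(1) f_def
        by (simp add: PI_pcomp)
      have g'p: "order_preserving g'" unfolding g'_def f_def
        using less.prems(2) pres_props(2)[OF ii] by (rule pp_pcomp)
      have dg': "dom g' = D" unfolding g'_def D_def
        using pres_props(3)[OF ii] RX by (intro dom_pcomp_sub) (simp add: f_def R_def)
      have rg': "ran g' = cyc i (i + 2) ` R"
        unfolding g'_def f_def pres_def ran_pcomp_mapon using RX by (simp add: R_def Int_absorb2)
      have kg': "card (dom g') + 2 \<le> n" using kn dg' k_def by simp
      have "sum id (dom g') + sum id (ran g') < sum id (dom g) + sum id (ran g)"
        using sum_cyc_less[OF fin(2) i(3,4)] dg' rg' by (simp add: D_def R_def)
      then have "g' \<in> ?G" by (rule less.hyps[OF _ g'PI g'p kg'])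
      then have "pcomp g' fi \<in> ?G" using fG by (intro gen.gen_mult)
      moreover have "pcomp g' fi = g" unfolding g'_def
        using ffi RX by (simp add: pcomp_assoc pcomp_pidon_right R_def)
      ultimately show ?thesis by simp
    qed
  qed
qed

lemma Xs_of_card:
  assumes "S \<subseteq> {1..n}" "card S = n - 1" "n \<ge> 1"
  shows "\<exists>a\<in>{1..n}. S = Xs n a"
proof -
  have "S \<noteq> {1..n}" using assms by auto
  then obtain a where a: "a \<in> {1..n}" "a \<notin> S" using assms(1) by blast
  then have "S \<subseteq> Xs n a" using assms(1) by (auto simp: Xs_def)
  moreover have "card (Xs n a) = n - 1" using a by (simp add: Xs_def)
  ultimately have "S = Xs n a" using assms(2) by (intro card_subset_eq) (auto simp: Xs_def)
  then show ?thesis using a by blast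
qed

lemma AM_sub_gen:
  assumes n: "n mod 4 = 3" and g: "g \<in> AM n"
  shows "g \<in> gen n (y n ` {1..n})"
proof -
  let ?G = "gen n (y n ` {1..n})"
  have gP: "g \<in> PI n" and m: "order_preserving g \<or> order_reversing g"
    using g by (auto simp: AM_def AI_def PMI_def)
  have DS: "dom g \<subseteq> {1..n}" "ran g \<subseteq> {1..n}" using gP by (auto simp: PI_def)
  have cr: "card (ran g) = card (dom g)" using card_ran_PI[OF gP] .
  have n3: "n \<ge> 3" using n by presburger
  have kle: "card (dom g) \<le> n" using DS card_mono[of "{1..n}" "dom g"] by simp
  consider "card (dom g) = n" | "card (dom g) = n - 1" | "card (dom g) + 2 \<le> n" using kle by linarith
  then show ?thesis
  proof cases
    case 1
    then have "ran g = {1..n}" using DS(2) cr by (intro card_subset_eq) auto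
    then have "g = pid n" using AM_full[OF n g] by simp
    then show ?thesis by (simp add: gen.gen_id)
  next
    case 2
    obtain a where a: "a \<in> {1..n}" "dom g = Xs n a" using Xs_of_card[OF DS(1) 2] n3 by auto
    obtain b where b: "b \<in> {1..n}" "ran g = Xs n b" using Xs_of_card[OF DS(2)] 2 cr n3 by auto
    have "g = am1 n a b" using AM_rank1_unique[OF n g a(2) b(2) a(1) b(1)] .
    then show ?thesis using am1_gen[OF n a(1) b(1)] by simp
  next
    case 3
    show ?thesis using m
    proof
      assume "order_preserving g"
      then show ?thesis using pres_gen_aux[OF n gP _ 3] by simp
    next
      assume rv: "order_reversing g"
      have "card ({1..n} - ran g) \<ge> 2" using 3 cr DS(2) by (simp add: card_Diff_subset finite_subset)
      then obtain j where j: "j \<in> {1..n}" "j \<notin> ran g" "j \<noteq> 1"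
      proof -
        assume th: "\<And>j. j \<in> {1..n} \<Longrightarrow> j \<notin> ran g \<Longrightarrow> j \<noteq> 1 \<Longrightarrow> thesis"
        have "\<not> ({1..n} - ran g \<subseteq> {1})"
        proof
          assume "{1..n} - ran g \<subseteq> {1}"
          then have "card ({1..n} - ran g) \<le> card {1::nat}" by (intro card_mono) auto
          then show False using \<open>card ({1..n} - ran g) \<ge> 2\<close> by simp
        qed
        then show thesis using th by blast
      qed
      have jj: "j \<in> {1..n}" "j - 1 \<in> {1..n}" using j by auto
      have odd1: "odd (j + (j - 1))" "odd (j - 1 + j)" using j by auto
      define r where "r = am1 n j (j - 1)"
      define ri where "ri = am1 n (j - 1) j"
      have r_eq: "r = revm n j (j - 1)" using odd1 by (simp add: r_def am1_def)
      have rG: "ri \<in> ?G" unfolding ri_def by (rule am1_gen[OF n jj(2,1)])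
      have rri: "pcomp r ri = pidon (Xs n j)"
        unfolding r_def ri_def using am1_pcomp[OF n jj(1) jj(2) jj(1)] am1_same by simp
      have RX: "ran g \<subseteq> Xs n j" using DS j by (auto simp: Xs_def)
      define g' where "g' = pcomp g r"
      have g'PI: "g' \<in> PI n" unfolding g'_def r_eq using revm_props(1)[OF jj] gP by (simp add: PI_pcomp)
      have g'p: "order_preserving g'" unfolding g'_def r_eq using rv revm_props(2)[OF jj] by (rule rr_pcomp)
      have "dom g' = dom g" unfolding g'_def r_eq using revm_props(3)[OF jj] RX by (intro dom_pcomp_sub) simp
      then have "card (dom g') + 2 \<le> n" using 3 by simp
      then have "g' \<in> ?G" using pres_gen_aux[OF n g'PI g'p] by simp
      then have "pcomp g' ri \<in> ?G" using rG by (intro gen.gen_mult)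
      moreover have "pcomp g' ri = g" unfolding g'_def
        using rri RX by (simp add: pcomp_assoc pcomp_pidon_right)
      ultimately show ?thesis by simp
    qed
  qed
qed

lemma dom_y: "n mod 4 = 3 \<Longrightarrow> i \<in> {1..n} \<Longrightarrow> dom (y n i) = Xs n i"
proof -
  assume n: "n mod 4 = 3" and i: "i \<in> {1..n}"
  show ?thesis
  proof (cases "i < n")
    case True
    then show ?thesis using y_lt[OF n _ True] am1_dom_ran[of i n "Suc i"] i by auto
  next
    case False
    then have "i = n" using i by auto
    then show ?thesis using y_n[OF n] am1_dom_ran[of n n 1] i by auto
  qed
qed

theorem theorem5p8:
  fixes n :: nat
  assumes "n mod 4 = 3"
  shows "generates n (y n ` {1..n}) (AM n)
    \<and> card (y n ` {1..n}) = n
    \<and> (\<forall>A. generates n A (AM n) \<longrightarrow> finite A \<and> n \<le> card A)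
    \<and> rank n (AM n) = n"
proof -
  have sub: "y n ` {1..n} \<subseteq> AM n" using y_AM[OF assms] by auto
  have gY: "generates n (y n ` {1..n}) (AM n)"
    unfolding generates_def using sub gen_AM[OF sub] AM_sub_gen[OF assms] by blast
  have "inj_on (y n) {1..n}"
  proof (rule inj_onI)
    fix i j assume ij: "i \<in> {1..n}" "j \<in> {1..n}" "y n i = y n j"
    then have "Xs n i = Xs n j" using dom_y[OF assms] by metis
    moreover have "i \<notin> Xs n i" by (simp add: Xs_def)
    ultimately have "i \<notin> Xs n j" by simp
    then show "i = j" using ij(1) by (simp add: Xs_def)
  qed
  then have cY: "card (y n ` {1..n}) = n" by (simp add: card_image)
  have lb: "\<forall>A. generates n A (AM n) \<longrightarrow> finite A \<and> n \<le> card A"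
    using lower_bound[OF _ assms] by blast
  have "rank n (AM n) = n" unfolding rank_def
  proof (rule Least_equality)
    show "\<exists>A. finite A \<and> card A = n \<and> generates n A (AM n)"
      using gY cY by (intro exI[of _ "y n ` {1..n}"]) auto
    fix k assume "\<exists>A. finite A \<and> card A = k \<and> generates n A (AM n)"
    then show "n \<le> k" using lb by auto
  qed
  then show ?thesis using gY cY lb by blast
qed

end
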